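(* Let $\mathfrak S$ be a commutative semiring and let $\sigma_{\mathfrak S}$ be the set of all finitely generated proper ideals of $\mathfrak S$, endowed with the ideal topology. If $\sigma_{\mathfrak S}$ is quasi-compact, then $\sigma_{\mathfrak S}$ contains all maximal ideals of $\mathfrak S$ (i.e. every maximal ideal of $\mathfrak S$ is finitely generated).
   Context: A semiring $(\mathfrak S,+,0,\cdot,1)$ has $(\mathfrak S,+,0)$ a commutative monoid, $(\mathfrak S,\cdot,1)$ a monoid, $0r=r0=0$, and two-sided distributivity; all semirings are commutative. An ideal is a nonempty proper subset closed under addition and under multiplication by elements of $\mathfrak S$; maximal means not properly contained in another ideal. For an ideal $\mathfrak a$, $\mathfrak a^{\uparrow}=\{\mathfrak x\in\sigma_{\mathfrak S}\mid\mathfrak a\subseteq\mathfrak x\}$; the ideal topology on $\sigma_{\mathfrak S}$ has the sets $\mathfrak a^{\uparrow}$ ($\mathfrak a$ any ideal) as a subbasis of closed sets. Quasi-compact means every open cover has a finite subcover. *)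

theory Defs
  imports "HOL-Analysis.Analysis"
begin

text \<open>Commutative semirings: type class combination comm_semiring_0 + comm_monoid_mult
  (commutative additive monoid, commutative multiplicative monoid with 1, 0 absorbing,
  distributivity; 0 = 1 is not excluded).\<close>

definition sr_ideal :: "'a::{comm_semiring_0,comm_monoid_mult} set \<Rightarrow> bool" where
  "sr_ideal I \<longleftrightarrow> I \<noteq> {} \<and> I \<noteq> UNIV \<and>
     (\<forall>x\<in>I. \<forall>y\<in>I. x + y \<in> I) \<and> (\<forall>r. \<forall>x\<in>I. r * x \<in> I)"

definition sr_maximal_ideal :: "'a::{comm_semiring_0,comm_monoid_mult} set \<Rightarrow> bool" where
  "sr_maximal_ideal M \<longleftrightarrow> sr_ideal M \<and> \<not> (\<exists>J. sr_ideal J \<and> M \<subset> J)"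

definition sr_generated :: "'a::{comm_semiring_0,comm_monoid_mult} set \<Rightarrow> 'a set" where
  "sr_generated F = {(\<Sum>f\<in>F. c f * f) | c. True}"

definition sr_fin_gen :: "'a::{comm_semiring_0,comm_monoid_mult} set \<Rightarrow> bool" where
  "sr_fin_gen I \<longleftrightarrow> (\<exists>F. finite F \<and> I = sr_generated F)"

definition sigma_S :: "'a::{comm_semiring_0,comm_monoid_mult} set set" where
  "sigma_S = {I. sr_ideal I \<and> sr_fin_gen I}"

definition up_set :: "'a::{comm_semiring_0,comm_monoid_mult} set \<Rightarrow> 'a set set" where
  "up_set a = {x \<in> sigma_S. a \<subseteq> x}"

text \<open>Ideal topology: the sets up_set a (a any ideal) form a subbasis of closed sets;
  equivalently their complements in sigma_S (together with sigma_S itself, the empty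
  intersection) form a subbasis of open sets.\<close>
definition ideal_topology :: "'a::{comm_semiring_0,comm_monoid_mult} set topology" where
  "ideal_topology = topology_generated_by
     (insert sigma_S {sigma_S - up_set a | a. sr_ideal a})"

end

theory Submission
  imports Defs
begin

lemma gen_sub:
  fixes M :: "'a::{comm_semiring_0,comm_monoid_mult} set"
  assumes "sr_ideal M" "F \<subseteq> M" "finite F"
  shows "sr_generated F \<subseteq> M"
proof
  fix x assume "x \<in> sr_generated F"
  then obtain c where x: "x = (\<Sum>f\<in>F. c f * f)" by (auto simp: sr_generated_def)
  have z: "0 \<in> M" using assms(1) unfolding sr_ideal_def
    by (metis all_not_in_conv mult_zero_left)
  have "(\<Sum>f\<in>G. c f * f) \<in> M" if "G \<subseteq> F" for G
    using finite_subset[OF that assms(3)] that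
  proof (induction G rule: finite_induct)
    case empty then show ?case using z by simp
  next
    case (insert a G)
    then show ?case using assms(1,2) unfolding sr_ideal_def by auto
  qed
  then show "x \<in> M" using x by blast
qed

lemma gen_ideal:
  fixes M :: "'a::{comm_semiring_0,comm_monoid_mult} set"
  assumes "sr_ideal M" "F \<subseteq> M" "finite F"
  shows "sr_ideal (sr_generated F)"
proof -
  have ne: "0 \<in> sr_generated F" unfolding sr_generated_def
    by (rule CollectI, rule exI[of _ "\<lambda>_. 0"]) simp
  have nu: "sr_generated F \<noteq> UNIV" using gen_sub[OF assms] assms(1) unfolding sr_ideal_def by blast
  have add: "x + y \<in> sr_generated F" if hx: "x \<in> sr_generated F" "y \<in> sr_generated F" for x y
  proof -
    obtain c where "x = (\<Sum>f\<in>F. c f * f)"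
      using hx(1) by (auto simp: sr_generated_def)
    moreover obtain d where "y = (\<Sum>f\<in>F. d f * f)"
      using hx(2) by (auto simp: sr_generated_def)
    ultimately have "x + y = (\<Sum>f\<in>F. (c f + d f) * f)" by (simp add: sum.distrib distrib_right)
    then show ?thesis unfolding sr_generated_def
      by (intro CollectI exI[of _ "\<lambda>f. c f + d f"]) simp
  qed
  have mul: "r * x \<in> sr_generated F" if hx: "x \<in> sr_generated F" for r x
  proof -
    obtain c where "x = (\<Sum>f\<in>F. c f * f)"
      using hx by (auto simp: sr_generated_def)
    then have "r * x = (\<Sum>f\<in>F. (r * c f) * f)" by (simp add: sum_distrib_left mult.assoc)
    then show ?thesis unfolding sr_generated_def
      by (intro CollectI exI[of _ "\<lambda>f. r * c f"]) simp
  qed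
  show ?thesis unfolding sr_ideal_def using ne nu add mul by blast
qed

lemma gen_mono:
  fixes F :: "'a::{comm_semiring_0,comm_monoid_mult} set"
  assumes "F \<subseteq> G" "finite G"
  shows "sr_generated F \<subseteq> sr_generated G"
proof
  fix x assume "x \<in> sr_generated F"
  then obtain c where x: "x = (\<Sum>f\<in>F. c f * f)" by (auto simp: sr_generated_def)
  have "(\<Sum>f\<in>G. (if f \<in> F then c f else 0) * f) = (\<Sum>f\<in>F. c f * f)"
  proof -
    have "(\<Sum>f\<in>G. (if f \<in> F then c f else 0) * f) = (\<Sum>f\<in>F. (if f \<in> F then c f else 0) * f)"
      using assms by (intro sum.mono_neutral_right) auto
    also have "\<dots> = (\<Sum>f\<in>F. c f * f)" by (rule sum.cong) auto
    finally show ?thesis .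
  qed
  then show "x \<in> sr_generated G" unfolding sr_generated_def x
    by (intro CollectI exI[of _ "\<lambda>f. if f \<in> F then c f else 0"]) simp
qed

lemma gen_single:
  fixes m :: "'a::{comm_semiring_0,comm_monoid_mult}"
  shows "m \<in> sr_generated {m}"
  unfolding sr_generated_def by (rule CollectI, rule exI[of _ "\<lambda>_. 1"]) simp

theorem proposition3p6:
  assumes "compact_space (ideal_topology :: 'a::{comm_semiring_0,comm_monoid_mult} set topology)"
  shows "\<forall>M::'a set. sr_maximal_ideal M \<longrightarrow> M \<in> sigma_S"
proof (intro allI impI)
  fix M :: "'a set"
  assume mx: "sr_maximal_ideal M"
  then have iM: "sr_ideal M" by (simp add: sr_maximal_ideal_def)
  show "M \<in> sigma_S"
  proof (rule ccontr)
    assume nM: "M \<notin> sigma_S"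
    define \<U> where "\<U> = {sigma_S - up_set (sr_generated F) | F. finite F \<and> F \<subseteq> M}"
    have top: "topspace ideal_topology = (sigma_S :: 'a set set)"
      unfolding ideal_topology_def by (auto simp: up_set_def)
    have op: "openin ideal_topology U" if hU: "U \<in> \<U>" for U
    proof -
      obtain F where F: "U = sigma_S - up_set (sr_generated F)" "finite F" "F \<subseteq> M"
        using hU unfolding \<U>_def by blast
      show ?thesis unfolding ideal_topology_def F(1)
        by (rule topology_generated_by_Basis) (use gen_ideal[OF iM F(3,2)] in blast)
    qed
    have cov: "sigma_S \<subseteq> \<Union>\<U>"
    proof
      fix x assume xs: "x \<in> (sigma_S :: 'a set set)"
      show "x \<in> \<Union>\<U>"
      proof (rule ccontr)
        assume "x \<notin> \<Union>\<U>"
        then have "sr_generated F \<subseteq> x" if "finite F" "F \<subseteq> M" for F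
          using that xs unfolding \<U>_def up_set_def by blast
        then have "M \<subseteq> x" using gen_single by blast
        moreover have "sr_ideal x" using xs by (simp add: sigma_S_def)
        ultimately have "M = x" using mx unfolding sr_maximal_ideal_def by blast
        then show False using xs nM by simp
      qed
    qed
    obtain \<F> where Ff: "finite \<F>" "\<F> \<subseteq> \<U>" "sigma_S \<subseteq> \<Union>\<F>"
      using assms unfolding compact_space_alt top using op cov by meson
    have "\<forall>U\<in>\<F>. \<exists>F. U = sigma_S - up_set (sr_generated F) \<and> finite F \<and> F \<subseteq> M"
      using Ff(2) \<U>_def by blast
    then obtain g where g: "\<And>U. U \<in> \<F> \<Longrightarrow> U = sigma_S - up_set (sr_generated (g U)) \<and> finite (g U) \<and> g U \<subseteq> M"
      by metis
    define G where "G = \<Union>(g ` \<F>)"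
    have Gf: "finite G" "G \<subseteq> M" using g Ff(1) unfolding G_def by auto
    have Gi: "sr_ideal (sr_generated G)" by (rule gen_ideal[OF iM Gf(2,1)])
    have Gfg: "sr_fin_gen (sr_generated G)" using Gf unfolding sr_fin_gen_def by blast
    have Gs: "sr_generated G \<in> sigma_S" using Gi Gfg by (simp add: sigma_S_def)
    then obtain U where U: "U \<in> \<F>" "sr_generated G \<in> U" using Ff(3) by blast
    have "g U \<subseteq> G" using U(1) unfolding G_def by blast
    then have "sr_generated (g U) \<subseteq> sr_generated G" using gen_mono Gf(1) by blast
    then show False using U g[OF U(1)] Gs unfolding up_set_def by blast
  qed
qed

end
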